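(* Let $a\ge b\ge1$ be integers with either $b\ge2$, or $b=1$ and $a\ge5$, and define $c_j,d_j$ ($j\in\mathbb Z_+$) by $c_0=d_0=0$, $c_1=d_1=1$, $c_{k+2}+c_k=a d_{k+1}$, $d_{k+2}+d_k=b c_{k+1}$. Then for all $k\ge0$: $$bc_{k+1}^2+ad_k^2-abc_{k+1}d_k+abc_{k+1}-2ad_k+a>0,$$ $$bc_k^2+ad_{k+1}^2-abc_kd_{k+1}-2bc_k+abd_{k+1}+b>0.$$
   Context: $\mathbb Z_+=\{0,1,2,\dots\}$. *)

theory Defs
  imports Main
begin

fun cd_seq :: "int \<Rightarrow> int \<Rightarrow> nat \<Rightarrow> int \<times> int" where
  "cd_seq a b 0 = (0, 0)"
| "cd_seq a b (Suc 0) = (1, 1)"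
| "cd_seq a b (Suc (Suc k)) =
     (a * snd (cd_seq a b (Suc k)) - fst (cd_seq a b k),
      b * fst (cd_seq a b (Suc k)) - snd (cd_seq a b k))"

definition cseq :: "int \<Rightarrow> int \<Rightarrow> nat \<Rightarrow> int" where
  "cseq a b k = fst (cd_seq a b k)"

definition dseq :: "int \<Rightarrow> int \<Rightarrow> nat \<Rightarrow> int" where
  "dseq a b k = snd (cd_seq a b k)"

end

theory Submission
  imports Defs
begin

lemma c0: "cseq a b 0 = 0" and d0: "dseq a b 0 = 0"
  and c1: "cseq a b (Suc 0) = 1" and d1: "dseq a b (Suc 0) = 1"
  by (simp_all add: cseq_def dseq_def)

lemma cS: "cseq a b (Suc (Suc k)) = a * dseq a b (Suc k) - cseq a b k"
  and dS: "dseq a b (Suc (Suc k)) = b * cseq a b (Suc k) - dseq a b k"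
  by (simp_all add: cseq_def dseq_def)

lemma c4: "cseq a b (k+4) = (a*b-2) * cseq a b (k+2) - cseq a b k"
proof -
  have e1: "cseq a b (k+4) = a * dseq a b (k+3) - cseq a b (k+2)"
    using cS[of a b "k+2"] by (simp add: numeral_eq_Suc)
  have e2: "dseq a b (k+3) = b * cseq a b (k+2) - dseq a b (k+1)"
    using dS[of a b "k+1"] by (simp add: numeral_eq_Suc)
  have e3: "cseq a b (k+2) = a * dseq a b (k+1) - cseq a b k"
    using cS[of a b k] by (simp add: numeral_eq_Suc)
  show ?thesis using e1 e2 e3 by (simp add: algebra_simps)
qed

lemma d4: "dseq a b (k+4) = (a*b-2) * dseq a b (k+2) - dseq a b k"
proof -
  have e1: "dseq a b (k+4) = b * cseq a b (k+3) - dseq a b (k+2)"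
    using dS[of a b "k+2"] by (simp add: numeral_eq_Suc)
  have e2: "cseq a b (k+3) = a * dseq a b (k+2) - cseq a b (k+1)"
    using cS[of a b "k+1"] by (simp add: numeral_eq_Suc)
  have e3: "dseq a b (k+2) = b * cseq a b (k+1) - dseq a b k"
    using dS[of a b k] by (simp add: numeral_eq_Suc)
  show ?thesis using e1 e2 e3 by (simp add: algebra_simps)
qed

definition QQ :: "int \<Rightarrow> int \<Rightarrow> int \<Rightarrow> int \<Rightarrow> int" where
  "QQ a b x y = b * x^2 + a * y^2 - a * b * x * y"

lemma Qpos:
  assumes "a > 0" "b > 0"
  shows "QQ a b (cseq a b (k+1)) (dseq a b k) > 0 \<and> QQ a b (cseq a b k) (dseq a b (k+1)) > 0"
proof (induction k)
  case 0
  then show ?case using assms by (simp add: QQ_def c0 d0 c1 d1)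
next
  case (Suc k)
  have e1: "cseq a b (k+2) = a * dseq a b (k+1) - cseq a b k"
    using cS[of a b k] by (simp add: numeral_eq_Suc)
  have e2: "dseq a b (k+2) = b * cseq a b (k+1) - dseq a b k"
    using dS[of a b k] by (simp add: numeral_eq_Suc)
  have A: "QQ a b (cseq a b (k+2)) (dseq a b (k+1)) = QQ a b (cseq a b k) (dseq a b (k+1))"
    unfolding e1 QQ_def by (simp add: algebra_simps power2_eq_square)
  have B: "QQ a b (cseq a b (k+1)) (dseq a b (k+2)) = QQ a b (cseq a b (k+1)) (dseq a b k)"
    unfolding e2 QQ_def by (simp add: algebra_simps power2_eq_square)
  show ?case using Suc A B by (simp add: numeral_eq_Suc)
qed

lemma mono2:
  assumes "a * b \<ge> 4" "a > 0" "b > 0"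
  shows "0 \<le> cseq a b k \<and> cseq a b k \<le> cseq a b (k+2) \<and> 0 \<le> dseq a b k \<and> dseq a b k \<le> dseq a b (k+2)"
proof (induction k rule: nat_less_induct)
  case (1 n)
  show ?case
  proof (cases "n < 2")
    case True
    then consider "n = 0" | "n = 1" by linarith
    then show ?thesis
    proof cases
      case 1
      have "cseq a b 2 = a" "dseq a b 2 = b"
        by (simp_all add: numeral_eq_Suc cS dS c0 d0 c1 d1)
      then show ?thesis using 1 assms by (simp add: c0 d0 numeral_eq_Suc)
    next
      case 2
      have "cseq a b 3 = a*b - 1" "dseq a b 3 = a*b - 1"
        by (simp_all add: numeral_eq_Suc cS dS c0 d0 c1 d1 algebra_simps)
      then show ?thesis using 2 assms by (simp add: c1 d1 numeral_3_eq_3)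
    qed
  next
    case False
    then obtain m where m: "n = m + 2" by (metis add.commute le_Suc_ex not_less)
    have IH: "0 \<le> cseq a b m \<and> cseq a b m \<le> cseq a b (m+2) \<and> 0 \<le> dseq a b m \<and> dseq a b m \<le> dseq a b (m+2)"
      using 1 m by simp
    have "(a*b-4) * cseq a b (m+2) \<ge> 0" using IH assms by simp
    moreover have "(a*b-4) * dseq a b (m+2) \<ge> 0" using IH assms by simp
    ultimately have "0 \<le> cseq a b (m+2) \<and> cseq a b (m+2) \<le> cseq a b (m+2+2) \<and> 0 \<le> dseq a b (m+2) \<and> dseq a b (m+2) \<le> dseq a b (m+2+2)"
    proof -
      have i: "m+2+2 = m+4" by simp
      show ?thesis unfolding i using IH c4[of a b m] d4[of a b m] \<open>(a*b-4) * cseq a b (m+2) \<ge> 0\<close> \<open>(a*b-4) * dseq a b (m+2) \<ge> 0\<close>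
        by (simp add: algebra_simps)
    qed
    then show ?thesis using m by simp
  qed
qed

theorem lemma3p6:
  fixes a b :: int and k :: nat
  assumes "a \<ge> b" and "b \<ge> 1"
    and "b \<ge> 2 \<or> (b = 1 \<and> a \<ge> 5)"
  shows "(b * (cseq a b (k+1))^2 + a * (dseq a b k)^2
           - a * b * cseq a b (k+1) * dseq a b k + a * b * cseq a b (k+1)
           - 2 * a * dseq a b k + a > 0)
       \<and> (b * (cseq a b k)^2 + a * (dseq a b (k+1))^2
           - a * b * cseq a b k * dseq a b (k+1) - 2 * b * cseq a b k
           + a * b * dseq a b (k+1) + b > 0)"
proof -
  have ab: "a * b \<ge> 4"
  proof (cases "b \<ge> 2")
    case True
    then have "a * b \<ge> 2 * 2" using assms by (intro mult_mono) auto
    then show ?thesis by simp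
  next
    case False
    then have "b = 1" using assms by auto
    then show ?thesis using assms by auto
  qed
  have pa: "a > 0" "b > 0" using assms by auto
  have Q: "QQ a b (cseq a b (k+1)) (dseq a b k) > 0" "QQ a b (cseq a b k) (dseq a b (k+1)) > 0"
    using Qpos[OF pa, of k] by auto
  have M: "0 \<le> cseq a b k \<and> cseq a b k \<le> cseq a b (k+2) \<and> 0 \<le> dseq a b k \<and> dseq a b k \<le> dseq a b (k+2)"
    using mono2[OF ab pa] by blast
  have e1: "cseq a b (k+2) = a * dseq a b (k+1) - cseq a b k"
    using cS[of a b k] by (simp add: numeral_eq_Suc)
  have e2: "dseq a b (k+2) = b * cseq a b (k+1) - dseq a b k"
    using dS[of a b k] by (simp add: numeral_eq_Suc)
  have p1: "a * (dseq a b (k+2) - dseq a b k + 1) > 0" using M pa by simp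
  have p2: "b * (cseq a b (k+2) - cseq a b k + 1) > 0" using M pa by simp
  have E1: "b * (cseq a b (k+1))^2 + a * (dseq a b k)^2
           - a * b * cseq a b (k+1) * dseq a b k + a * b * cseq a b (k+1)
           - 2 * a * dseq a b k + a = QQ a b (cseq a b (k+1)) (dseq a b k) + a * (dseq a b (k+2) - dseq a b k + 1)"
    unfolding e2 QQ_def by (simp add: algebra_simps)
  have E2: "b * (cseq a b k)^2 + a * (dseq a b (k+1))^2
           - a * b * cseq a b k * dseq a b (k+1) - 2 * b * cseq a b k
           + a * b * dseq a b (k+1) + b = QQ a b (cseq a b k) (dseq a b (k+1)) + b * (cseq a b (k+2) - cseq a b k + 1)"
    unfolding e1 QQ_def by (simp add: algebra_simps)
  show ?thesis unfolding E1 E2 using Q p1 p2 by simp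
qed

end
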